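(* Let $G_1$ and $G_2$ be graphs on $n$ nodes with Laplacian matrices $Q_1,Q_2$, let $k\in\{1,\dots,n\}$, and let $\hat B$ be an $n\times n$ zero-one matrix with exactly $k$ ones in every row and every column. For $p\ge 0$ let $$Q(p)=\begin{bmatrix} Q_1+kpI & -p\hat B\\ -p\hat B^T & Q_2+kpI\end{bmatrix},$$ with eigenvalues $0=\mu_N(p)\le \mu_{N-1}(p)\le\dots\le\mu_1(p)$, $N=2n$. Define the transition threshold $p^*=\sup\big(\{0\}\cup\{p>0:\ \mu_{N-1}(p)=2kp\}\big)$. Then $$p^*\le \frac{1}{k}\min\big(\mu_{n-1}(Q_1),\ \mu_{n-1}(Q_2)\big),$$ where $\mu_{n-1}(Q_i)$ denotes the second smallest eigenvalue (algebraic connectivity) of $Q_i$.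
   Context: $Q(p)$ is the Laplacian of the two-layer interdependent network with a $k$-to-$k$ interconnection of weight $p$; $2kp$ is always an eigenvalue of $Q(p)$ (eigenvector $[u^T,-u^T]^T$). The paper describes $p^*$ as the coupling value beyond which $\mu_{N-1}(p)\neq 2kp$; here it is formalized as the supremum above. *)

theory Defs
  imports "Jordan_Normal_Form.Char_Poly" "HOL-Library.Multiset"
begin

definition simple_graph :: "nat \<Rightarrow> (nat \<Rightarrow> nat \<Rightarrow> bool) \<Rightarrow> bool" where
  "simple_graph n E \<longleftrightarrow> (\<forall>i j. E i j \<longrightarrow> i < n \<and> j < n) \<and>
     (\<forall>i j. E i j \<longrightarrow> E j i) \<and> (\<forall>i. \<not> E i i)"

definition laplacian :: "nat \<Rightarrow> (nat \<Rightarrow> nat \<Rightarrow> bool) \<Rightarrow> real mat" where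
  "laplacian n E = mat n n (\<lambda>(i,j).
     if i = j then real (card {l. l < n \<and> E i l}) else if E i j then -1 else 0)"

definition eigs_asc :: "real mat \<Rightarrow> real list" where
  "eigs_asc A = sorted_list_of_multiset (proots (char_poly A))"

definition k_regular_01 :: "nat \<Rightarrow> nat \<Rightarrow> real mat \<Rightarrow> bool" where
  "k_regular_01 n k B \<longleftrightarrow> B \<in> carrier_mat n n \<and>
     (\<forall>i<n. \<forall>j<n. B $$ (i,j) = 0 \<or> B $$ (i,j) = 1) \<and>
     (\<forall>i<n. card {j. j < n \<and> B $$ (i,j) = 1} = k) \<and>
     (\<forall>j<n. card {i. i < n \<and> B $$ (i,j) = 1} = k)"

definition Qp :: "nat \<Rightarrow> nat \<Rightarrow> real mat \<Rightarrow> real mat \<Rightarrow> real mat \<Rightarrow> real \<Rightarrow> real mat" where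
  "Qp n k Q1 Q2 B p = four_block_mat
     (Q1 + (real k * p) \<cdot>\<^sub>m 1\<^sub>m n) (- (p \<cdot>\<^sub>m B))
     (- (p \<cdot>\<^sub>m transpose_mat B)) (Q2 + (real k * p) \<cdot>\<^sub>m 1\<^sub>m n)"

text \<open>mu_{N-1}(p): the second smallest eigenvalue of Q(p).\<close>
definition mu_Nm1 :: "nat \<Rightarrow> nat \<Rightarrow> real mat \<Rightarrow> real mat \<Rightarrow> real mat \<Rightarrow> real \<Rightarrow> real" where
  "mu_Nm1 n k Q1 Q2 B p = eigs_asc (Qp n k Q1 Q2 B p) ! 1"

definition p_star :: "nat \<Rightarrow> nat \<Rightarrow> real mat \<Rightarrow> real mat \<Rightarrow> real mat \<Rightarrow> real" where
  "p_star n k Q1 Q2 B = Sup ({0} \<union> {p. p > 0 \<and> mu_Nm1 n k Q1 Q2 B p = 2 * real k * p})"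

end

theory Submission
  imports Defs "HOL-Computational_Algebra.Fundamental_Theorem_Algebra"
begin

lemma complex_root_exists: fixes p :: "complex poly" assumes "degree p > 0" shows "\<exists>z. poly p z = 0"
  using fundamental_theorem_of_algebra constant_degree assms by (metis neq0_conv)

lemma sym_real_eigenvalue:
  fixes A :: "real mat"
  assumes A: "A \<in> carrier_mat m m" and sym: "transpose_mat A = A" and m: "m > 0"
  shows "\<exists>e. eigenvalue A e"
proof -
  let ?Ac = "map_mat complex_of_real A"
  have Ac: "?Ac \<in> carrier_mat m m" using A by auto
  have "degree (char_poly ?Ac) = m" using degree_monic_char_poly[OF Ac] by auto
  then obtain z where "poly (char_poly ?Ac) z = 0" using complex_root_exists m by auto
  then have "eigenvalue ?Ac z" using eigenvalue_root_char_poly[OF Ac] by auto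
  then obtain v where v: "v \<in> carrier_vec m" "v \<noteq> 0\<^sub>v m" "?Ac *\<^sub>v v = z \<cdot>\<^sub>v v"
    unfolding eigenvalue_def eigenvector_def using Ac by auto
  define s where "s = (\<Sum>i<m. cnj (v$i) * (\<Sum>j<m. complex_of_real (A$$(i,j)) * v$j))"
  define r where "r = (\<Sum>i<m. cnj (v$i) * v$i)"
  have eq: "\<And>i. i < m \<Longrightarrow> (\<Sum>j<m. complex_of_real (A$$(i,j)) * v$j) = z * v$i"
  proof -
    fix i assume i: "i < m"
    have "(?Ac *\<^sub>v v) $ i = z * v $ i" using v(3) i v(1) by simp
    then show "(\<Sum>j<m. complex_of_real (A$$(i,j)) * v$j) = z * v$i"
      using i A v(1) by (auto simp: mult_mat_vec_def scalar_prod_def lessThan_atLeast0 intro: sum.cong)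
  qed
  have "s = (\<Sum>i<m. cnj (v$i) * (z * v$i))" unfolding s_def
    by (rule sum.cong, simp, simp add: eq)
  then have s1: "s = z * r" unfolding r_def
    by (simp add: sum_distrib_left mult.commute mult.left_commute)
  have symA: "\<And>i j. i < m \<Longrightarrow> j < m \<Longrightarrow> A$$(i,j) = A$$(j,i)"
    using sym A by (metis carrier_matD index_transpose_mat(1))
  have "cnj s = (\<Sum>i<m. \<Sum>j<m. v$i * (complex_of_real (A$$(i,j)) * cnj (v$j)))"
    unfolding s_def by (simp add: sum_distrib_left)
  also have "\<dots> = (\<Sum>j<m. \<Sum>i<m. v$i * (complex_of_real (A$$(i,j)) * cnj (v$j)))"
    by (rule sum.swap)
  also have "\<dots> = s" unfolding s_def
    by (auto simp: sum_distrib_left symA intro!: sum.cong)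
  finally have cs: "cnj s = s" .
  have rr: "r = complex_of_real (\<Sum>i<m. (cmod (v$i))^2)"
  proof -
    have "r = (\<Sum>i<m. complex_of_real ((cmod (v$i))^2))" unfolding r_def
      by (rule sum.cong, simp, subst complex_norm_square, simp add: mult.commute)
    then show ?thesis by simp
  qed
  have "\<exists>i<m. v$i \<noteq> 0" using v(1,2) by (metis carrier_vecD eq_vecI index_zero_vec(1,2))
  then obtain i0 where i0: "i0 < m" "v$i0 \<noteq> 0" by auto
  have "(\<Sum>i<m. (cmod (v$i))^2) \<ge> (cmod (v$i0))^2"
    using i0 by (intro member_le_sum) auto
  moreover have "(cmod (v$i0))^2 > 0" using i0 by auto
  ultimately have rpos: "(\<Sum>i<m. (cmod (v$i))^2) > 0" by linarith
  have "cnj z * r = z * r" using cs s1 rr by (metis complex_cnj_complex_of_real complex_cnj_mult)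
  moreover have "r \<noteq> 0" using rpos rr by (metis less_irrefl of_real_eq_0_iff)
  ultimately have "cnj z = z" by simp
  then have zr: "z = complex_of_real (Re z)" by (metis Reals_cnj_iff complex_is_Real_iff complex_eq_iff Im_complex_of_real Re_complex_of_real)
  have "poly (map_poly complex_of_real (char_poly A)) (complex_of_real (Re z)) = 0"
    using \<open>poly (char_poly ?Ac) z = 0\<close> of_real_hom.char_poly_hom[OF A] zr by metis
  then have "poly (char_poly A) (Re z) = 0" by (simp add: of_real_hom.poly_map_poly)
  then show ?thesis using eigenvalue_root_char_poly[OF A] by blast
qed

lemma hh_sum:
  fixes w :: "nat \<Rightarrow> real"
  assumes i: "i < m" and j: "j < m" and c: "c * (\<Sum>k<m. w k * w k) = 2"
  shows "(\<Sum>k<m. ((if i = k then 1 else 0) - c * w i * w k) * ((if k = j then 1 else 0) - c * w k * w j))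
     = (if i = j then 1 else 0)"
proof -
  have "(\<Sum>k<m. ((if i = k then 1 else 0) - c * w i * w k) * ((if k = j then 1 else 0) - c * w k * w j))
     = (\<Sum>k<m. (if i = k then (if k = j then 1 else 0) else 0)) - (\<Sum>k<m. (if i = k then c * w k * w j else 0))
       - (\<Sum>k<m. (if k = j then c * w i * w k else 0)) + (c * c * w i * w j) * (\<Sum>k<m. w k * w k)"
  proof -
    have "(\<Sum>k<m. ((if i = k then 1 else 0) - c * w i * w k) * ((if k = j then 1 else 0) - c * w k * w j))
      = (\<Sum>k<m. (if i = k then (if k = j then 1 else 0) else 0) - (if i = k then c * w k * w j else 0)
       - (if k = j then c * w i * w k else 0) + (c * c * w i * w j) * (w k * w k))"
      by (rule sum.cong, simp, auto simp: algebra_simps)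
    then show ?thesis by (simp add: sum_subtractf sum.distrib sum_distrib_left)
  qed
  also have "\<dots> = (if i = j then 1 else 0) - c * w i * w j - c * w i * w j + c * w i * w j * (c * (\<Sum>k<m. w k * w k))"
    using i j by (simp add: sum.delta sum.delta')
  also have "\<dots> = (if i = j then 1 else 0)" using c by simp
  finally show ?thesis .
qed

lemma householder:
  fixes v :: "real vec"
  assumes v: "v \<in> carrier_vec m" and vv: "v \<bullet> v = 1" and m: "m > 0"
  shows "\<exists>H \<in> carrier_mat m m. transpose_mat H = H \<and> H * H = 1\<^sub>m m \<and> H *\<^sub>v v = unit_vec m 0"
proof (cases "v = unit_vec m 0")
  case True
  then show ?thesis using v by (intro bexI[of _ "1\<^sub>m m"]) auto
next
  case False
  define w where "w = v - unit_vec m 0"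
  have w: "w \<in> carrier_vec m" using v unfolding w_def by auto
  have wi: "\<And>i. i < m \<Longrightarrow> w $ i = v $ i - (if i = 0 then 1 else 0)"
    using v unfolding w_def by auto
  have vsum: "(\<Sum>k<m. v$k * v$k) = 1" using vv v by (simp add: scalar_prod_def lessThan_atLeast0)
  have wv: "(\<Sum>k<m. w$k * v$k) = 1 - v$0"
  proof -
    have "(\<Sum>k<m. w$k * v$k) = (\<Sum>k<m. v$k * v$k - (if k = 0 then v$k else 0))"
      by (rule sum.cong, auto simp: wi algebra_simps)
    then show ?thesis using vsum m by (simp add: sum_subtractf)
  qed
  have ww: "(\<Sum>k<m. w$k * w$k) = 2 * (1 - v$0)"
  proof -
    have "(\<Sum>k<m. w$k * w$k) = (\<Sum>k<m. w$k * v$k - (if k = 0 then w$k else 0))"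
      by (rule sum.cong, auto simp: wi algebra_simps)
    then show ?thesis using wv m by (simp add: sum_subtractf wi)
  qed
  have "w \<noteq> 0\<^sub>v m"
  proof
    assume w0: "w = 0\<^sub>v m"
    have "v = unit_vec m 0"
    proof (rule eq_vecI)
      fix i assume "i < dim_vec (unit_vec m 0)"
      then have "i < m" by simp
      then have "w $ i = 0" using w0 by simp
      then show "v $ i = unit_vec m 0 $ i" using wi[OF \<open>i < m\<close>] \<open>i < m\<close> by auto
    qed (insert v, auto)
    then show False using False by simp
  qed
  then obtain i0 where i0: "i0 < m" "w $ i0 \<noteq> 0" using w
    by (metis carrier_vecD eq_vecI index_zero_vec(1,2))
  have "(\<Sum>k<m. w$k * w$k) \<ge> w$i0 * w$i0" using i0 by (intro member_le_sum) auto
  moreover have "w$i0 * w$i0 > 0" using i0(2) not_real_square_gt_zero by blast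
  ultimately have wpos: "(\<Sum>k<m. w$k * w$k) > 0" by linarith
  then have v0: "1 - v$0 \<noteq> 0" using ww by auto
  define c where "c = 2 / (\<Sum>k<m. w$k * w$k)"
  have c: "c * (\<Sum>k<m. w$k * w$k) = 2" unfolding c_def using wpos by auto
  have c1: "c * (1 - v$0) = 1" unfolding c_def ww using v0 by auto
  define H where "H = mat m m (\<lambda>(i,j). (if i = j then 1 else 0) - c * w$i * w$j)"
  have H: "H \<in> carrier_mat m m" unfolding H_def by auto
  have "transpose_mat H = H" unfolding H_def by (rule eq_matI, auto)
  moreover have "H * H = 1\<^sub>m m"
  proof (rule eq_matI)
    fix i j assume i: "i < dim_row (1\<^sub>m m)" and j: "j < dim_col (1\<^sub>m m)"
    have "(H * H) $$ (i,j) = (\<Sum>k<m. ((if i = k then 1 else 0) - c * w$i * w$k) * ((if k = j then 1 else 0) - c * w$k * w$j))"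
      using i j unfolding H_def by (auto simp: scalar_prod_def lessThan_atLeast0 intro!: sum.cong)
    also have "\<dots> = (if i = j then 1 else 0)"
      by (rule hh_sum[of i m j c "\<lambda>k. w$k"], insert i j c, auto)
    finally show "(H * H) $$ (i,j) = 1\<^sub>m m $$ (i,j)" using i j by auto
  qed (insert H, auto)
  moreover have "H *\<^sub>v v = unit_vec m 0"
  proof (rule eq_vecI)
    fix i assume i: "i < dim_vec (unit_vec m 0)"
    have "(H *\<^sub>v v) $ i = (\<Sum>k<m. ((if i = k then 1 else 0) - c * w$i * w$k) * v$k)"
      using i v unfolding H_def by (auto simp: scalar_prod_def lessThan_atLeast0 mult_mat_vec_def intro!: sum.cong)
    also have "\<dots> = v$i - c * w$i * (\<Sum>k<m. w$k * v$k)"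
    proof -
      have "(\<Sum>k<m. ((if i = k then 1 else 0) - c * w$i * w$k) * v$k)
        = (\<Sum>k<m. (if i = k then v$k else 0) - (c * w$i) * (w$k * v$k))"
        by (rule sum.cong, auto simp: algebra_simps)
      then show ?thesis using i by (simp add: sum_subtractf sum_distrib_left)
    qed
    also have "\<dots> = v$i - w$i" unfolding wv using c1 by (simp add: mult.assoc)
    also have "\<dots> = unit_vec m 0 $ i" using i wi by auto
    finally show "(H *\<^sub>v v) $ i = unit_vec m 0 $ i" .
  qed (insert H, auto)
  ultimately show ?thesis using H by blast
qed

lemma bd_mult:
  fixes A1 A2 D1 D2 :: "'a :: comm_ring_1 mat"
  assumes "A1 \<in> carrier_mat a a" "D1 \<in> carrier_mat b b" "A2 \<in> carrier_mat a a" "D2 \<in> carrier_mat b b"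
  shows "four_block_mat A1 (0\<^sub>m a b) (0\<^sub>m b a) D1 * four_block_mat A2 (0\<^sub>m a b) (0\<^sub>m b a) D2
    = four_block_mat (A1 * A2) (0\<^sub>m a b) (0\<^sub>m b a) (D1 * D2)"
  by (subst mult_four_block_mat[of _ a a _ b _ b], insert assms, auto)

lemma bd_transpose:
  assumes "A1 \<in> carrier_mat a a" "D1 \<in> carrier_mat b b"
  shows "transpose_mat (four_block_mat A1 (0\<^sub>m a b) (0\<^sub>m b a) D1)
    = four_block_mat (transpose_mat A1) (0\<^sub>m a b) (0\<^sub>m b a) (transpose_mat D1)"
  by (subst transpose_four_block_mat, insert assms, auto)

lemma spectral:
  fixes A :: "real mat"
  assumes "A \<in> carrier_mat m m" and "transpose_mat A = A"
  shows "\<exists>U D. U \<in> carrier_mat m m \<and> D \<in> carrier_mat m m \<and> transpose_mat U * U = 1\<^sub>m m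
    \<and> U * transpose_mat U = 1\<^sub>m m \<and> diagonal_mat D \<and> A = U * D * transpose_mat U"
  using assms
proof (induction m arbitrary: A)
  case 0
  then show ?case
    by (intro exI[of _ "1\<^sub>m 0"], auto simp: diagonal_mat_def intro!: eq_matI)
next
  case (Suc m A)
  note A = Suc.prems(1) and symA = Suc.prems(2)
  have as: "\<And>X Y Z. X \<in> carrier_mat (Suc m) (Suc m) \<Longrightarrow> Y \<in> carrier_mat (Suc m) (Suc m)
    \<Longrightarrow> Z \<in> carrier_mat (Suc m) (Suc m) \<Longrightarrow> X * Y * Z = X * (Y * Z)"
    by (rule assoc_mult_mat) auto
  obtain e where "eigenvalue A e" using sym_real_eigenvalue[OF A symA] by auto
  then obtain u where u: "u \<in> carrier_vec (Suc m)" "u \<noteq> 0\<^sub>v (Suc m)" "A *\<^sub>v u = e \<cdot>\<^sub>v u"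
    unfolding eigenvalue_def eigenvector_def using A by auto
  have cu: "conjugate u = u" by (intro eq_vecI) (auto simp: conjugate_vec_def conjugate_real_def)
  have upos: "u \<bullet> u > 0" using conjugate_square_greater_0_vec[OF u(1)] u(2) cu by simp
  define v where "v = (1 / sqrt (u \<bullet> u)) \<cdot>\<^sub>v u"
  have v: "v \<in> carrier_vec (Suc m)" unfolding v_def using u by auto
  have vv: "v \<bullet> v = 1" unfolding v_def using u(1) upos
    by (simp add: smult_scalar_prod_distrib scalar_prod_smult_distrib[of _ "Suc m"] power2_eq_square[symmetric])
  have Av: "A *\<^sub>v v = e \<cdot>\<^sub>v v" unfolding v_def using u A
    by (simp add: mult_mat_vec smult_smult_assoc mult.commute)
  obtain H where H: "H \<in> carrier_mat (Suc m) (Suc m)" "transpose_mat H = H" "H * H = 1\<^sub>m (Suc m)"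
    "H *\<^sub>v v = unit_vec (Suc m) 0"
    using householder[OF v vv] by auto
  have He: "H *\<^sub>v unit_vec (Suc m) 0 = v"
  proof -
    have "H *\<^sub>v unit_vec (Suc m) 0 = H *\<^sub>v (H *\<^sub>v v)" using H by simp
    also have "\<dots> = (H * H) *\<^sub>v v" using H v by (intro assoc_mult_mat_vec[symmetric]) auto
    finally show ?thesis using H v by simp
  qed
  define A' where "A' = H * A * H"
  have A': "A' \<in> carrier_mat (Suc m) (Suc m)" unfolding A'_def using H A by auto
  have symA': "transpose_mat A' = A'"
  proof -
    have "transpose_mat A' = transpose_mat H * transpose_mat (H * A)" unfolding A'_def
      using H A by (intro transpose_mult[of _ "Suc m" "Suc m"]) auto
    also have "transpose_mat (H * A) = transpose_mat A * transpose_mat H"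
      using H A by (intro transpose_mult[of _ "Suc m" "Suc m"]) auto
    finally show ?thesis unfolding A'_def using H A symA
      by (simp add: as)
  qed
  have A'e: "A' *\<^sub>v unit_vec (Suc m) 0 = e \<cdot>\<^sub>v unit_vec (Suc m) 0"
  proof -
    have "A' *\<^sub>v unit_vec (Suc m) 0 = (H * A) *\<^sub>v (H *\<^sub>v unit_vec (Suc m) 0)"
      unfolding A'_def using H A by (intro assoc_mult_mat_vec) auto
    also have "\<dots> = H *\<^sub>v (A *\<^sub>v v)" unfolding He using H A v by (intro assoc_mult_mat_vec) auto
    also have "\<dots> = e \<cdot>\<^sub>v (H *\<^sub>v v)" unfolding Av using H v by (intro mult_mat_vec) auto
    finally show ?thesis using H by simp
  qed
  have A'col: "\<And>i. i < Suc m \<Longrightarrow> A' $$ (i, 0) = (if i = 0 then e else 0)"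
  proof -
    fix i assume i: "i < Suc m"
    have "(A' *\<^sub>v unit_vec (Suc m) 0) $ i = A' $$ (i, 0)" using A' i by simp
    then show "A' $$ (i, 0) = (if i = 0 then e else 0)" using A'e i by (cases "i = 0") auto
  qed
  have A'row: "\<And>j. j < Suc m \<Longrightarrow> A' $$ (0, j) = (if j = 0 then e else 0)"
  proof -
    fix j assume j: "j < Suc m"
    have "A' $$ (0, j) = transpose_mat A' $$ (j, 0)" using j A' by simp
    then show "A' $$ (0, j) = (if j = 0 then e else 0)" using symA' A'col[OF j] by simp
  qed
  define A3 where "A3 = mat m m (\<lambda>(i,j). A' $$ (Suc i, Suc j))"
  have A3: "A3 \<in> carrier_mat m m" unfolding A3_def by auto
  have symA3: "transpose_mat A3 = A3" unfolding A3_def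
    using symA' A' by (intro eq_matI; auto; metis Suc_less_eq carrier_matD index_transpose_mat(1))
  define A1 where "A1 = mat 1 1 (\<lambda>_. e)"
  have A1: "A1 \<in> carrier_mat 1 1" unfolding A1_def by auto
  have A'b: "A' = four_block_mat A1 (0\<^sub>m 1 m) (0\<^sub>m m 1) A3"
    by (rule eq_matI, insert A' A'col A'row, auto simp: A1_def A3_def)
  obtain U3 D3 where U3: "U3 \<in> carrier_mat m m" "D3 \<in> carrier_mat m m" "transpose_mat U3 * U3 = 1\<^sub>m m"
    "U3 * transpose_mat U3 = 1\<^sub>m m" "diagonal_mat D3" "A3 = U3 * D3 * transpose_mat U3"
    using Suc.IH[OF A3 symA3] by auto
  define V where "V = four_block_mat (1\<^sub>m 1) (0\<^sub>m 1 m) (0\<^sub>m m 1) U3"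
  define D where "D = four_block_mat A1 (0\<^sub>m 1 m) (0\<^sub>m m 1) D3"
  have V: "V \<in> carrier_mat (Suc m) (Suc m)" unfolding V_def using U3 by auto
  have D: "D \<in> carrier_mat (Suc m) (Suc m)" unfolding D_def using U3 A1 by auto
  have VT: "transpose_mat V = four_block_mat (1\<^sub>m 1) (0\<^sub>m 1 m) (0\<^sub>m m 1) (transpose_mat U3)"
    unfolding V_def by (subst bd_transpose, insert U3, auto)
  have VTV: "transpose_mat V * V = 1\<^sub>m (Suc m)"
    unfolding VT unfolding V_def by (subst bd_mult, insert U3, auto)
  have VDVT: "V * D * transpose_mat V = A'"
    unfolding VT unfolding V_def D_def A'b using U3 A1
    by (simp add: bd_mult)
  define U where "U = H * V"
  have U: "U \<in> carrier_mat (Suc m) (Suc m)" unfolding U_def using H V by auto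
  have UT: "transpose_mat U = transpose_mat V * H" unfolding U_def using H V
    by (simp add: transpose_mult[of _ "Suc m" "Suc m"])
  have UTU: "transpose_mat U * U = 1\<^sub>m (Suc m)"
  proof -
    have "transpose_mat U * U = transpose_mat V * H * (H * V)" unfolding UT by (simp add: U_def)
    also have "\<dots> = transpose_mat V * (H * (H * V))" using H V
      by (intro as) auto
    also have "H * (H * V) = V" using H V by (simp add: assoc_mult_mat[of _ "Suc m" "Suc m", symmetric])
    finally show ?thesis using VTV by simp
  qed
  have UUT: "U * transpose_mat U = 1\<^sub>m (Suc m)"
    by (rule mat_mult_left_right_inverse[OF _ U UTU], insert U, auto)
  have "H * A' = H * (H * A) * H" unfolding A'_def using H A
    by (simp add: as)
  also have "H * (H * A) = (H * H) * A" by (subst as) (use H A in auto)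
  finally have "H * A' * H = A * H * H" using H A by simp
  also have "\<dots> = A * (H * H)" using H A by (simp add: as)
  finally have "A = H * A' * H" using H A by simp
  also have "\<dots> = U * D * transpose_mat U" unfolding VDVT[symmetric] UT unfolding U_def using H V D
    by (simp add: as)
  finally have "A = U * D * transpose_mat U" .
  moreover have "diagonal_mat D" unfolding diagonal_mat_def D_def using U3(2,5) A1
    by (auto simp: diagonal_mat_def A1_def)
  ultimately show ?case using U D UTU UUT by blast
qed

lemma proots_linprod: "proots (\<Prod>a\<leftarrow>xs. [:- a, 1:]) = mset (xs :: real list)"
proof (induction xs)
  case Nil then show ?case by simp
next
  case (Cons a xs)
  have nz: "(\<Prod>a\<leftarrow>xs. [:- a, 1:]) \<noteq> (0 :: real poly)"
    by (auto simp: prod_list_zero_iff)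
  have "proots [:- a, 1:] = {#a#}" using proots_linear_factor[of "-a"] by simp
  have "proots (\<Prod>a\<leftarrow>a # xs. [:- a, 1:]) = proots ([:- a, 1:] * (\<Prod>a\<leftarrow>xs. [:- a, 1:]))" by simp
  also have "\<dots> = proots [:- a, 1:] + proots (\<Prod>a\<leftarrow>xs. [:- a, 1:])"
    by (rule proots_mult) (use nz in auto)
  finally show ?case using Cons \<open>proots [:- a, 1:] = {#a#}\<close> by simp
qed

lemma eigs_asc_spectral:
  fixes A :: "real mat"
  assumes A: "A \<in> carrier_mat m m" and U: "U \<in> carrier_mat m m" and D: "D \<in> carrier_mat m m"
    and UTU: "transpose_mat U * U = 1\<^sub>m m" and UUT: "U * transpose_mat U = 1\<^sub>m m"
    and dg: "diagonal_mat D" and AU: "A = U * D * transpose_mat U"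
  shows "eigs_asc A = sort (diag_mat D)"
proof -
  have "similar_mat A D" by (rule similar_matI[of _ _ _ _ m], insert A U D UTU UUT AU, auto)
  then have "char_poly A = char_poly D" by (rule char_poly_similar)
  also have "\<dots> = (\<Prod>a\<leftarrow>diag_mat D. [:- a, 1:])"
    by (rule char_poly_upper_triangular[OF D], insert dg D, auto simp: diagonal_mat_def upper_triangular_def)
  finally show ?thesis unfolding eigs_asc_def by (simp add: proots_linprod)
qed

lemma qf_spectral:
  fixes A :: "real mat"
  assumes A: "A \<in> carrier_mat m m" and U: "U \<in> carrier_mat m m" and D: "D \<in> carrier_mat m m"
    and UTU: "transpose_mat U * U = 1\<^sub>m m"
    and dg: "diagonal_mat D" and AU: "A = U * D * transpose_mat U"
    and w: "w \<in> carrier_vec m"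
  shows "(U *\<^sub>v w) \<bullet> (U *\<^sub>v w) = (\<Sum>i<m. (w$i)^2)"
    and "(U *\<^sub>v w) \<bullet> (A *\<^sub>v (U *\<^sub>v w)) = (\<Sum>i<m. D$$(i,i) * (w$i)^2)"
proof -
  have UTUw: "transpose_mat U *\<^sub>v (U *\<^sub>v w) = w"
    using U w UTU by (metis assoc_mult_mat_vec one_mult_mat_vec transpose_carrier_mat)
  have "(U *\<^sub>v w) \<bullet> (U *\<^sub>v w) = (transpose_mat U *\<^sub>v (U *\<^sub>v w)) \<bullet> w"
    using transpose_vec_mult_scalar[OF U w, of "U *\<^sub>v w"] U w by simp
  also have "\<dots> = w \<bullet> w" unfolding UTUw ..
  also have "\<dots> = (\<Sum>i<m. (w$i)^2)" using w by (simp add: scalar_prod_def lessThan_atLeast0 power2_eq_square)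
  finally show "(U *\<^sub>v w) \<bullet> (U *\<^sub>v w) = (\<Sum>i<m. (w$i)^2)" .
  have "A *\<^sub>v (U *\<^sub>v w) = U *\<^sub>v (D *\<^sub>v (transpose_mat U *\<^sub>v (U *\<^sub>v w)))"
    unfolding AU using U D w by (simp add: assoc_mult_mat_vec[of _ m m _ m])
  also have "\<dots> = U *\<^sub>v (D *\<^sub>v w)" unfolding UTUw ..
  finally have "(U *\<^sub>v w) \<bullet> (A *\<^sub>v (U *\<^sub>v w)) = (U *\<^sub>v w) \<bullet> (U *\<^sub>v (D *\<^sub>v w))" by simp
  also have "\<dots> = (transpose_mat U *\<^sub>v (U *\<^sub>v w)) \<bullet> (D *\<^sub>v w)"
    using transpose_vec_mult_scalar[OF U, of "D *\<^sub>v w" "U *\<^sub>v w"] U w D by simp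
  also have "\<dots> = w \<bullet> (D *\<^sub>v w)" unfolding UTUw ..
  also have "\<dots> = (\<Sum>i<m. D$$(i,i) * (w$i)^2)"
  proof -
    have "\<And>i. i < m \<Longrightarrow> (D *\<^sub>v w) $ i = D$$(i,i) * w$i"
    proof -
      fix i assume i: "i < m"
      have "(D *\<^sub>v w) $ i = (\<Sum>j<m. D$$(i,j) * w$j)"
        using D w i by (simp add: mult_mat_vec_def scalar_prod_def lessThan_atLeast0)
      also have "\<dots> = (\<Sum>j<m. if j = i then D$$(i,i) * w$i else 0)"
        using dg D i by (intro sum.cong) (auto simp: diagonal_mat_def)
      finally show "(D *\<^sub>v w) $ i = D$$(i,i) * w$i" using i by simp
    qed
    then show ?thesis using w D
      by (simp add: scalar_prod_def lessThan_atLeast0 power2_eq_square algebra_simps)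
  qed
  finally show "(U *\<^sub>v w) \<bullet> (A *\<^sub>v (U *\<^sub>v w)) = (\<Sum>i<m. D$$(i,i) * (w$i)^2)" .
qed

lemma length_filter_sort: "length (filter P (sort xs)) = length (filter P (xs :: real list))"
  by (metis mset_filter mset_sort size_mset)

lemma sort_count_le:
  fixes xs :: "real list" assumes "length xs \<ge> 2"
  shows "card {i. i < length xs \<and> xs!i \<le> sort xs ! 1} \<ge> 2"
proof -
  obtain a b t where s: "sort xs = a # b # t"
    using assms by (metis length_sort Suc_le_length_iff numeral_2_eq_2)
  have "sorted (a # b # t)" using s by (metis sorted_sort)
  then have ab: "a \<le> b" by simp
  have "length (filter (\<lambda>y. y \<le> b) (sort xs)) \<ge> 2" unfolding s using ab by simp
  then have "length (filter (\<lambda>y. y \<le> b) xs) \<ge> 2" unfolding length_filter_sort .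
  then show ?thesis unfolding length_filter_conv_card s by simp
qed

lemma sort_count_lt:
  fixes xs :: "real list" assumes "length xs \<ge> 2"
  shows "card {i. i < length xs \<and> xs!i < sort xs ! 1} \<le> 1"
proof -
  obtain a b t where s: "sort xs = a # b # t"
    using assms by (metis length_sort Suc_le_length_iff numeral_2_eq_2)
  have "sorted (a # b # t)" using s by (metis sorted_sort)
  then have "\<forall>y\<in>set t. b \<le> y" by simp
  then have "filter (\<lambda>y. y < b) t = []" by (auto simp: filter_empty_conv not_less)
  then have "length (filter (\<lambda>y. y < b) (sort xs)) \<le> 1" unfolding s by simp
  then have "length (filter (\<lambda>y. y < b) xs) \<le> 1" unfolding length_filter_sort .
  then show ?thesis unfolding length_filter_conv_card s by simp
qed

lemma sum_two:
  fixes a b :: real and m i0 i1 :: nat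
  assumes "i0 \<noteq> i1" "i0 < m" "i1 < m"
  shows "(\<Sum>i<m. (if i = i0 then a else if i = i1 then b else 0)) = a + b"
proof -
  have "(\<Sum>i<m. (if i = i0 then a else if i = i1 then b else 0))
     = (\<Sum>i<m. (if i = i0 then a else 0) + (if i = i1 then b else 0))"
    using assms by (intro sum.cong) auto
  also have "\<dots> = a + b" using assms sum.delta[of "{..<m}" i0 "\<lambda>_. a"] sum.delta[of "{..<m}" i1 "\<lambda>_. b"]
    by (simp add: sum.distrib)
  finally show ?thesis .
qed

lemma diag_count:
  fixes D :: "real mat" assumes D: "D \<in> carrier_mat m m"
  shows "{i. i < length (diag_mat D) \<and> diag_mat D ! i \<le> c} = {i. i < m \<and> D$$(i,i) \<le> c}"
    and "{i. i < length (diag_mat D) \<and> diag_mat D ! i < c} = {i. i < m \<and> D$$(i,i) < c}"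
    and "length (diag_mat D) = m"
  using D by (auto simp: diag_mat_def)

lemma cf_lower:
  fixes A :: "real mat"
  assumes A: "A \<in> carrier_mat m m" and symA: "transpose_mat A = A" and m: "m \<ge> 2"
    and c: "c \<in> carrier_vec m"
  shows "\<exists>x \<in> carrier_vec m. x \<bullet> x > 0 \<and> x \<bullet> c = 0 \<and> x \<bullet> (A *\<^sub>v x) \<le> eigs_asc A ! 1 * (x \<bullet> x)"
proof -
  obtain U D where U: "U \<in> carrier_mat m m" and D: "D \<in> carrier_mat m m"
    and UTU: "transpose_mat U * U = 1\<^sub>m m" and UUT: "U * transpose_mat U = 1\<^sub>m m"
    and dg: "diagonal_mat D" and AU: "A = U * D * transpose_mat U"
    using spectral[OF A symA] by blast
  define lam where "lam = eigs_asc A ! 1"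
  have lam: "lam = sort (diag_mat D) ! 1" unfolding lam_def
    using eigs_asc_spectral[OF A U D UTU UUT dg AU] by simp
  define S where "S = {i. i < m \<and> D$$(i,i) \<le> lam}"
  have cS: "card S \<ge> 2" unfolding S_def lam
    using sort_count_le[of "diag_mat D"] diag_count[OF D] m by simp
  have fS: "finite S" unfolding S_def by auto
  obtain i0 where i0: "i0 \<in> S" using cS by (metis card.empty ex_in_conv not_numeral_le_zero)
  have "card (S - {i0}) \<ge> 1" using cS i0 fS by simp
  then obtain i1 where i1: "i1 \<in> S" "i1 \<noteq> i0" by (metis One_nat_def card.empty ex_in_conv not_one_le_zero Diff_iff singletonI)
  have i0m: "i0 < m" and i1m: "i1 < m" and d0: "D$$(i0,i0) \<le> lam" and d1: "D$$(i1,i1) \<le> lam"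
    using i0 i1 unfolding S_def by auto
  define g where "g = transpose_mat U *\<^sub>v c"
  define al where "al = (if g$i1 = 0 \<and> g$i0 = 0 then 1 else g$i1)"
  define be where "be = (if g$i1 = 0 \<and> g$i0 = 0 then 0 else - g$i0)"
  have ab: "al^2 + be^2 > 0" unfolding al_def be_def
    by (auto simp: sum_power2_gt_zero_iff)
  have gab: "g$i0 * al + g$i1 * be = 0" unfolding al_def be_def by auto
  define w where "w = vec m (\<lambda>i. if i = i0 then al else if i = i1 then be else 0)"
  have w: "w \<in> carrier_vec m" unfolding w_def by auto
  define x where "x = U *\<^sub>v w"
  have x: "x \<in> carrier_vec m" unfolding x_def using U w by auto
  have "x \<bullet> x = (\<Sum>i<m. (w$i)^2)" unfolding x_def by (rule qf_spectral(1)[OF A U D UTU dg AU w])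
  also have "\<dots> = (\<Sum>i<m. (if i = i0 then al^2 else if i = i1 then be^2 else 0))"
    unfolding w_def by (intro sum.cong) auto
  also have "\<dots> = al^2 + be^2" by (rule sum_two[OF i1(2)[symmetric] i0m i1m])
  finally have xx: "x \<bullet> x = al^2 + be^2" .
  have "x \<bullet> (A *\<^sub>v x) = (\<Sum>i<m. D$$(i,i) * (w$i)^2)" unfolding x_def by (rule qf_spectral(2)[OF A U D UTU dg AU w])
  also have "\<dots> = (\<Sum>i<m. (if i = i0 then D$$(i0,i0) * al^2 else if i = i1 then D$$(i1,i1) * be^2 else 0))"
    unfolding w_def by (intro sum.cong) auto
  also have "\<dots> = D$$(i0,i0) * al^2 + D$$(i1,i1) * be^2" by (rule sum_two[OF i1(2)[symmetric] i0m i1m])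
  also have "\<dots> \<le> lam * al^2 + lam * be^2"
    using d0 d1 by (intro add_mono mult_right_mono) auto
  finally have xAx: "x \<bullet> (A *\<^sub>v x) \<le> lam * (x \<bullet> x)" unfolding xx by (simp add: algebra_simps)
  have "c \<bullet> x = g \<bullet> w" unfolding x_def g_def
    using transpose_vec_mult_scalar[OF U w c] by simp
  also have "\<dots> = (\<Sum>i<m. (if i = i0 then g$i0 * al else if i = i1 then g$i1 * be else 0))"
    using w unfolding g_def scalar_prod_def using U c by (auto simp: w_def lessThan_atLeast0 intro!: sum.cong)
  also have "\<dots> = 0" using sum_two[OF i1(2)[symmetric] i0m i1m] gab by simp
  finally have "x \<bullet> c = 0" using comm_scalar_prod[OF x c] by simp
  then show ?thesis using x ab xAx xx unfolding lam_def by (intro bexI[of _ x]) auto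
qed

lemma cf_upper:
  fixes A :: "real mat"
  assumes A: "A \<in> carrier_mat m m" and symA: "transpose_mat A = A" and m: "m \<ge> 2"
    and x: "x \<in> carrier_vec m" and y: "y \<in> carrier_vec m"
    and xx: "x \<bullet> x > 0" and yy: "y \<bullet> y > 0" and xy: "x \<bullet> y = 0"
    and Ax: "A *\<^sub>v x = 0\<^sub>v m" and yAy: "y \<bullet> (A *\<^sub>v y) \<le> c * (y \<bullet> y)" and c: "c \<ge> 0"
  shows "eigs_asc A ! 1 \<le> c"
proof (rule ccontr)
  assume "\<not> eigs_asc A ! 1 \<le> c"
  then have lc: "eigs_asc A ! 1 > c" by simp
  obtain U D where U: "U \<in> carrier_mat m m" and D: "D \<in> carrier_mat m m"
    and UTU: "transpose_mat U * U = 1\<^sub>m m" and UUT: "U * transpose_mat U = 1\<^sub>m m"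
    and dg: "diagonal_mat D" and AU: "A = U * D * transpose_mat U"
    using spectral[OF A symA] by blast
  define lam where "lam = eigs_asc A ! 1"
  have lam: "lam = sort (diag_mat D) ! 1" unfolding lam_def
    using eigs_asc_spectral[OF A U D UTU UUT dg AU] by simp
  define T where "T = {i. i < m \<and> D$$(i,i) < lam}"
  have cT: "card T \<le> 1" unfolding T_def lam
    using sort_count_lt[of "diag_mat D"] diag_count[OF D] m by simp
  have fT: "finite T" unfolding T_def by auto
  obtain i0 where i0: "i0 < m" and big: "\<And>i. i < m \<Longrightarrow> i \<noteq> i0 \<Longrightarrow> D$$(i,i) \<ge> lam"
  proof (cases "T = {}")
    case True
    then show ?thesis using that[of 0] m unfolding T_def by force
  next
    case False
    then have "card T = 1" using cT fT by (simp add: Suc_leI antisym card_gt_0_iff)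
    then obtain t where "T = {t}" by (rule card_1_singletonE)
    then show ?thesis using that[of t] unfolding T_def by (metis (mono_tags, lifting) insertI1 mem_Collect_eq not_le singleton_iff)
  qed
  define gx where "gx = transpose_mat U *\<^sub>v x"
  define gy where "gy = transpose_mat U *\<^sub>v y"
  have UT: "transpose_mat U \<in> carrier_mat m m" using U by simp
  have xAy: "x \<bullet> (A *\<^sub>v y) = 0"
    using transpose_vec_mult_scalar[OF A y x] symA Ax y by simp
  obtain z where z: "z \<in> carrier_vec m" "z \<bullet> z > 0" "z \<bullet> (A *\<^sub>v z) \<le> c * (z \<bullet> z)"
    "(transpose_mat U *\<^sub>v z) $ i0 = 0"
  proof (cases "gx $ i0 = 0")
    case True
    then show ?thesis using that[of x] x xx Ax c unfolding gx_def by simp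
  next
    case False
    define a where "a = gx $ i0"
    define b where "b = gy $ i0"
    define z where "z = b \<cdot>\<^sub>v x - a \<cdot>\<^sub>v y"
    have zc: "z \<in> carrier_vec m" unfolding z_def using x y by auto
    have "transpose_mat U *\<^sub>v z = b \<cdot>\<^sub>v gx - a \<cdot>\<^sub>v gy" unfolding z_def gx_def gy_def
      using UT x y by (simp add: mult_minus_distrib_mat_vec mult_mat_vec)
    then have z0: "(transpose_mat U *\<^sub>v z) $ i0 = 0" unfolding a_def b_def gx_def gy_def
      using i0 UT by simp
    have "A *\<^sub>v z = b \<cdot>\<^sub>v 0\<^sub>v m - a \<cdot>\<^sub>v (A *\<^sub>v y)" unfolding z_def using A x y Ax
      by (simp add: mult_minus_distrib_mat_vec mult_mat_vec)
    also have "\<dots> = - a \<cdot>\<^sub>v (A *\<^sub>v y)" using A y by (intro eq_vecI) auto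
    finally have Az: "A *\<^sub>v z = - a \<cdot>\<^sub>v (A *\<^sub>v y)" .
    have yx: "y \<bullet> x = 0" using xy comm_scalar_prod[OF x y] by simp
    have zz: "z \<bullet> z = b * b * (x \<bullet> x) + a * a * (y \<bullet> y)" unfolding z_def
      using x y xy yx by (simp add: minus_scalar_prod_distrib scalar_prod_minus_distrib algebra_simps)
    have zAz: "z \<bullet> (A *\<^sub>v z) = a * a * (y \<bullet> (A *\<^sub>v y))" unfolding Az unfolding z_def
      using x y xAy A by (simp add: minus_scalar_prod_distrib algebra_simps)
    have "a * a > 0" using False not_real_square_gt_zero unfolding a_def by blast
    then have zpos: "z \<bullet> z > 0" unfolding zz using xx yy
      by (metis add_nonneg_pos mult_nonneg_nonneg mult_pos_pos less_le zero_le_square)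
    have "z \<bullet> (A *\<^sub>v z) \<le> a * a * (c * (y \<bullet> y))" unfolding zAz
      using yAy \<open>a * a > 0\<close> by (simp add: mult_left_mono)
    also have "\<dots> \<le> c * (z \<bullet> z)"
    proof -
      have "0 \<le> (b * b) * (c * (x \<bullet> x))" using c xx by simp
      then show ?thesis unfolding zz by (simp add: algebra_simps)
    qed
    finally show ?thesis using that[of z] zc zpos z0 by simp
  qed
  define w where "w = transpose_mat U *\<^sub>v z"
  have w: "w \<in> carrier_vec m" unfolding w_def using UT z by simp
  have zw: "z = U *\<^sub>v w" unfolding w_def using U z UUT
    by (metis assoc_mult_mat_vec one_mult_mat_vec transpose_carrier_mat)
  have "lam * (z \<bullet> z) = (\<Sum>i<m. lam * (w$i)^2)"
    unfolding zw qf_spectral(1)[OF A U D UTU dg AU w] by (simp add: sum_distrib_left)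
  also have "\<dots> \<le> (\<Sum>i<m. D$$(i,i) * (w$i)^2)"
  proof (rule sum_mono)
    fix i assume "i \<in> {..<m}"
    then show "lam * (w$i)^2 \<le> D$$(i,i) * (w$i)^2"
      using big[of i] z(4) unfolding w_def by (cases "i = i0") (auto intro: mult_right_mono)
  qed
  also have "\<dots> = z \<bullet> (A *\<^sub>v z)" unfolding zw qf_spectral(2)[OF A U D UTU dg AU w] ..
  also have "\<dots> \<le> c * (z \<bullet> z)" by (rule z(3))
  finally have "lam * (z \<bullet> z) \<le> c * (z \<bullet> z)" .
  then have "lam \<le> c" using z(2) by simp
  then show False using lc unfolding lam_def by simp
qed

definition ind :: "(nat \<Rightarrow> nat \<Rightarrow> bool) \<Rightarrow> nat \<Rightarrow> nat \<Rightarrow> real" where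
  "ind E i j = (if E i j then 1 else 0)"

lemma lap_entry:
  assumes G: "simple_graph n E" and i: "i < n" and j: "j < n"
  shows "laplacian n E $$ (i,j) = (if i = j then (\<Sum>l<n. ind E i l) else 0) - ind E i j"
proof -
  have c1: "card {l. l < n \<and> E i l} = card {l \<in> {..<n}. E i l}" by (rule arg_cong[of _ _ card]) auto
  have s1: "(\<Sum>l<n. ind E i l) = (\<Sum>l \<in> {l \<in> {..<n}. E i l}. (1::real))"
    unfolding ind_def by (rule sum.inter_filter[symmetric]) simp
  have s2: "(\<Sum>l \<in> {l \<in> {..<n}. E i l}. (1::real)) = real (card {l \<in> {..<n}. E i l})"
    by simp
  have "real (card {l. l < n \<and> E i l}) = (\<Sum>l<n. ind E i l)" unfolding c1 s1 s2 ..
  moreover have "\<not> E i i" using G unfolding simple_graph_def by auto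
  ultimately show ?thesis using i j unfolding laplacian_def ind_def by auto
qed

lemma lap_carrier: "laplacian n E \<in> carrier_mat n n" unfolding laplacian_def by auto

lemma ind_sym: "simple_graph n E \<Longrightarrow> ind E i j = ind E j i"
  unfolding simple_graph_def ind_def by auto

lemma lap_sym: assumes G: "simple_graph n E" shows "transpose_mat (laplacian n E) = laplacian n E"
  by (rule eq_matI, insert lap_carrier[of n E], auto simp: lap_entry[OF G] ind_sym[OF G])

lemma lap_mult_vec:
  assumes G: "simple_graph n E" and x: "x \<in> carrier_vec n" and i: "i < n"
  shows "(laplacian n E *\<^sub>v x) $ i = (\<Sum>j<n. ind E i j * (x$i - x$j))"
proof -
  have "(laplacian n E *\<^sub>v x) $ i = (\<Sum>j<n. laplacian n E $$ (i,j) * x$j)"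
    using i x lap_carrier[of n E] by (simp add: mult_mat_vec_def scalar_prod_def lessThan_atLeast0)
  also have "\<dots> = (\<Sum>j<n. (if i = j then (\<Sum>l<n. ind E i l) * x$i else 0) - ind E i j * x$j)"
    using i by (intro sum.cong) (auto simp: lap_entry[OF G] algebra_simps)
  also have "\<dots> = (\<Sum>l<n. ind E i l) * x$i - (\<Sum>j<n. ind E i j * x$j)"
    using i by (simp add: sum_subtractf)
  also have "\<dots> = (\<Sum>j<n. ind E i j * (x$i - x$j))"
    by (simp add: sum_distrib_right sum_subtractf right_diff_distrib)
  finally show ?thesis .
qed

lemma lap_one:
  assumes G: "simple_graph n E"
  shows "laplacian n E *\<^sub>v vec n (\<lambda>_. 1) = 0\<^sub>v n"
proof (rule eq_vecI)
  fix i assume "i < dim_vec (0\<^sub>v n :: real vec)"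
  then have i: "i < n" by simp
  have "(laplacian n E *\<^sub>v vec n (\<lambda>_. 1)) $ i = (\<Sum>j<n. ind E i j * (vec n (\<lambda>_. 1) $ i - vec n (\<lambda>_. 1) $ j))"
    by (rule lap_mult_vec[OF G _ i]) simp
  also have "\<dots> = 0" using i by (intro sum.neutral) simp
  finally show "(laplacian n E *\<^sub>v vec n (\<lambda>_. 1)) $ i = 0\<^sub>v n $ i" using i by simp
qed (insert lap_carrier[of n E], auto)

lemma lap_psd:
  assumes G: "simple_graph n E" and x: "x \<in> carrier_vec n"
  shows "x \<bullet> (laplacian n E *\<^sub>v x) \<ge> 0"
proof -
  define S where "S = (\<Sum>i<n. \<Sum>j<n. ind E i j * (x$i * x$i - x$i * x$j))"
  have "x \<bullet> (laplacian n E *\<^sub>v x) = (\<Sum>i<n. x$i * (laplacian n E *\<^sub>v x) $ i)"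
    using x lap_carrier[of n E] by (simp add: scalar_prod_def lessThan_atLeast0)
  also have "\<dots> = (\<Sum>i<n. x$i * (\<Sum>j<n. ind E i j * (x$i - x$j)))"
    by (intro sum.cong refl) (simp add: lap_mult_vec[OF G x])
  also have "\<dots> = S" unfolding S_def by (simp add: sum_distrib_left algebra_simps)
  finally have S: "x \<bullet> (laplacian n E *\<^sub>v x) = S" .
  have "S = (\<Sum>j<n. \<Sum>i<n. ind E i j * (x$i * x$i - x$i * x$j))" unfolding S_def by (rule sum.swap)
  also have "\<dots> = (\<Sum>j<n. \<Sum>i<n. ind E j i * (x$i * x$i - x$i * x$j))" by (simp add: ind_sym[OF G])
  finally have S2: "S = (\<Sum>i<n. \<Sum>j<n. ind E i j * (x$j * x$j - x$j * x$i))" .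
  have "2 * S = (\<Sum>i<n. \<Sum>j<n. ind E i j * (x$i - x$j)^2)"
    by (subst mult_2, subst (1) S_def, subst S2)
       (simp add: sum.distrib[symmetric] power2_eq_square algebra_simps)
  also have "\<dots> \<ge> 0" by (intro sum_nonneg) (auto simp: ind_def)
  finally show ?thesis unfolding S by simp
qed

lemma smult_mat_mult_vec:
  fixes A :: "real mat"
  assumes A: "A \<in> carrier_mat n n" and v: "v \<in> carrier_vec n"
  shows "(c \<cdot>\<^sub>m A) *\<^sub>v v = c \<cdot>\<^sub>v (A *\<^sub>v v)"
  by (rule eq_vecI, insert A v, auto simp: smult_scalar_prod_distrib[of _ n])

lemma mult_one_vec_index:
  fixes M :: "real mat"
  assumes M: "M \<in> carrier_mat n n" and i: "i < n"
  shows "(M *\<^sub>v vec n (\<lambda>_. 1)) $ i = (\<Sum>j<n. M $$ (i,j))"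
  using M i by (simp add: scalar_prod_def lessThan_atLeast0)

lemma kreg_facts:
  assumes kr: "k_regular_01 n k B"
  shows "B \<in> carrier_mat n n" "B *\<^sub>v vec n (\<lambda>_. 1) = real k \<cdot>\<^sub>v vec n (\<lambda>_. 1)"
    "transpose_mat B *\<^sub>v vec n (\<lambda>_. 1) = real k \<cdot>\<^sub>v vec n (\<lambda>_. 1)"
proof -
  show B: "B \<in> carrier_mat n n" using kr unfolding k_regular_01_def by auto
  have rs: "\<And>i. i < n \<Longrightarrow> (\<Sum>j<n. B $$ (i,j)) = real k"
  proof -
    fix i assume i: "i < n"
    have "(\<Sum>j<n. B $$ (i,j)) = (\<Sum>j<n. if B $$ (i,j) = 1 then 1 else 0)"
      using kr i unfolding k_regular_01_def by (intro sum.cong) auto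
    also have "\<dots> = (\<Sum>j \<in> {j \<in> {..<n}. B $$ (i,j) = 1}. (1::real))"
      by (rule sum.inter_filter[symmetric]) simp
    also have "\<dots> = real (card {j \<in> {..<n}. B $$ (i,j) = 1})" by simp
    also have "{j \<in> {..<n}. B $$ (i,j) = 1} = {j. j < n \<and> B $$ (i,j) = 1}" by auto
    finally show "(\<Sum>j<n. B $$ (i,j)) = real k" using kr i unfolding k_regular_01_def by auto
  qed
  have cs: "\<And>j. j < n \<Longrightarrow> (\<Sum>i<n. B $$ (i,j)) = real k"
  proof -
    fix j assume j: "j < n"
    have "(\<Sum>i<n. B $$ (i,j)) = (\<Sum>i<n. if B $$ (i,j) = 1 then 1 else 0)"
      using kr j unfolding k_regular_01_def by (intro sum.cong) auto
    also have "\<dots> = (\<Sum>i \<in> {i \<in> {..<n}. B $$ (i,j) = 1}. (1::real))"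
      by (rule sum.inter_filter[symmetric]) simp
    also have "\<dots> = real (card {i \<in> {..<n}. B $$ (i,j) = 1})" by simp
    also have "{i \<in> {..<n}. B $$ (i,j) = 1} = {i. i < n \<and> B $$ (i,j) = 1}" by auto
    finally show "(\<Sum>i<n. B $$ (i,j)) = real k" using kr j unfolding k_regular_01_def by auto
  qed
  show "B *\<^sub>v vec n (\<lambda>_. 1) = real k \<cdot>\<^sub>v vec n (\<lambda>_. 1)"
    by (rule eq_vecI, insert B, auto simp: mult_one_vec_index[OF B] rs simp del: index_mult_mat_vec)
  have BT: "transpose_mat B \<in> carrier_mat n n" using B by simp
  show "transpose_mat B *\<^sub>v vec n (\<lambda>_. 1) = real k \<cdot>\<^sub>v vec n (\<lambda>_. 1)"
    by (rule eq_vecI, insert B, auto simp: mult_one_vec_index[OF BT] cs simp del: index_mult_mat_vec)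
qed

lemma lap_sym_entry: "simple_graph n E \<Longrightarrow> i < n \<Longrightarrow> j < n \<Longrightarrow> laplacian n E $$ (i,j) = laplacian n E $$ (j,i)"
  by (simp add: lap_entry ind_sym)

declare lap_carrier[simp]

lemma Qp_facts:
  fixes p :: real and B :: "real mat"
  assumes G1: "simple_graph n E1" and G2: "simple_graph n E2" and kr: "k_regular_01 n k B"
  defines "Q \<equiv> Qp n k (laplacian n E1) (laplacian n E2) B p"
  shows "Q \<in> carrier_mat (n+n) (n+n)" "transpose_mat Q = Q"
    "Q *\<^sub>v vec (n+n) (\<lambda>_. 1) = 0\<^sub>v (n+n)"
    "\<And>v. v \<in> carrier_vec n \<Longrightarrow> (v @\<^sub>v 0\<^sub>v n) \<bullet> (Q *\<^sub>v (v @\<^sub>v 0\<^sub>v n))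
        = v \<bullet> (laplacian n E1 *\<^sub>v v) + real k * p * (v \<bullet> v)"
    "\<And>v. v \<in> carrier_vec n \<Longrightarrow> (0\<^sub>v n @\<^sub>v v) \<bullet> (Q *\<^sub>v (0\<^sub>v n @\<^sub>v v))
        = v \<bullet> (laplacian n E2 *\<^sub>v v) + real k * p * (v \<bullet> v)"
proof -
  let ?L1 = "laplacian n E1" and ?L2 = "laplacian n E2" and ?one = "vec n (\<lambda>_. 1) :: real vec"
  let ?A = "?L1 + (real k * p) \<cdot>\<^sub>m 1\<^sub>m n" and ?D = "?L2 + (real k * p) \<cdot>\<^sub>m 1\<^sub>m n"
  let ?Bm = "- (p \<cdot>\<^sub>m B)" and ?Cm = "- (p \<cdot>\<^sub>m transpose_mat B)"
  have L1: "?L1 \<in> carrier_mat n n" and L2: "?L2 \<in> carrier_mat n n" by (rule lap_carrier)+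
  have B: "B \<in> carrier_mat n n" using kreg_facts[OF kr] by simp
  have A: "?A \<in> carrier_mat n n" and D: "?D \<in> carrier_mat n n" using L1 L2 by auto
  have Bm: "?Bm \<in> carrier_mat n n" and Cm: "?Cm \<in> carrier_mat n n" using B by auto
  have Qd: "Q = four_block_mat ?A ?Bm ?Cm ?D" unfolding Q_def Qp_def ..
  show Qc: "Q \<in> carrier_mat (n+n) (n+n)" unfolding Qd using A D by auto
  show "transpose_mat Q = Q"
    by (rule eq_matI, insert Qc L1 L2 B, auto simp: Qd lap_sym_entry[OF G1] lap_sym_entry[OF G2])
  have Aone: "\<And>M. M \<in> carrier_mat n n \<Longrightarrow> M *\<^sub>v ?one = 0\<^sub>v n \<Longrightarrow>
      (M + (real k * p) \<cdot>\<^sub>m 1\<^sub>m n) *\<^sub>v ?one = (real k * p) \<cdot>\<^sub>v ?one"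
  proof -
    fix M :: "real mat" assume M: "M \<in> carrier_mat n n" and M1: "M *\<^sub>v ?one = 0\<^sub>v n"
    have "(M + (real k * p) \<cdot>\<^sub>m 1\<^sub>m n) *\<^sub>v ?one = M *\<^sub>v ?one + ((real k * p) \<cdot>\<^sub>m 1\<^sub>m n) *\<^sub>v ?one"
      using M by (intro add_mult_distrib_mat_vec) auto
    also have "((real k * p) \<cdot>\<^sub>m 1\<^sub>m n) *\<^sub>v ?one = (real k * p) \<cdot>\<^sub>v ?one"
      by (subst smult_mat_mult_vec[of _ n]) auto
    finally show "(M + (real k * p) \<cdot>\<^sub>m 1\<^sub>m n) *\<^sub>v ?one = (real k * p) \<cdot>\<^sub>v ?one"
      unfolding M1 by simp
  qed
  have Bone: "\<And>M. M \<in> carrier_mat n n \<Longrightarrow> M *\<^sub>v ?one = real k \<cdot>\<^sub>v ?one \<Longrightarrow>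
      (- (p \<cdot>\<^sub>m M)) *\<^sub>v ?one = - ((real k * p) \<cdot>\<^sub>v ?one)"
  proof -
    fix M :: "real mat" assume M: "M \<in> carrier_mat n n" and M1: "M *\<^sub>v ?one = real k \<cdot>\<^sub>v ?one"
    have "(- (p \<cdot>\<^sub>m M)) *\<^sub>v ?one = - ((p \<cdot>\<^sub>m M) *\<^sub>v ?one)" using M by simp
    also have "(p \<cdot>\<^sub>m M) *\<^sub>v ?one = p \<cdot>\<^sub>v (M *\<^sub>v ?one)" using M by (intro smult_mat_mult_vec) auto
    finally show "(- (p \<cdot>\<^sub>m M)) *\<^sub>v ?one = - ((real k * p) \<cdot>\<^sub>v ?one)" unfolding M1
      by (simp add: smult_smult_assoc mult.commute)
  qed
  have one2: "vec (n+n) (\<lambda>_. 1) = ?one @\<^sub>v ?one" by (rule eq_vecI) auto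
  have "Q *\<^sub>v vec (n+n) (\<lambda>_. 1) = (?A *\<^sub>v ?one + ?Bm *\<^sub>v ?one) @\<^sub>v (?Cm *\<^sub>v ?one + ?D *\<^sub>v ?one)"
    unfolding one2 Qd by (rule four_block_mat_mult_vec[OF A Bm Cm D]) auto
  also have "\<dots> = ((real k * p) \<cdot>\<^sub>v ?one + - ((real k * p) \<cdot>\<^sub>v ?one)) @\<^sub>v
      (- ((real k * p) \<cdot>\<^sub>v ?one) + (real k * p) \<cdot>\<^sub>v ?one)"
    using Aone[OF L1 lap_one[OF G1]] Aone[OF L2 lap_one[OF G2]]
      Bone[OF B kreg_facts(2)[OF kr]] Bone[OF _ kreg_facts(3)[OF kr]] B by simp
  also have "\<dots> = 0\<^sub>v (n+n)" by (rule eq_vecI) auto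
  finally show "Q *\<^sub>v vec (n+n) (\<lambda>_. 1) = 0\<^sub>v (n+n)" .
  have mz: "\<And>M :: real mat. M \<in> carrier_mat n n \<Longrightarrow> M *\<^sub>v 0\<^sub>v n = 0\<^sub>v n"
    by (rule eq_vecI) (auto simp: scalar_prod_def)
  have Av: "\<And>M (v :: real vec). M \<in> carrier_mat n n \<Longrightarrow> v \<in> carrier_vec n \<Longrightarrow>
     v \<bullet> ((M + (real k * p) \<cdot>\<^sub>m 1\<^sub>m n) *\<^sub>v v) = v \<bullet> (M *\<^sub>v v) + real k * p * (v \<bullet> v)"
  proof -
    fix M :: "real mat" and v :: "real vec" assume M: "M \<in> carrier_mat n n" and v: "v \<in> carrier_vec n"
    have "(M + (real k * p) \<cdot>\<^sub>m 1\<^sub>m n) *\<^sub>v v = M *\<^sub>v v + ((real k * p) \<cdot>\<^sub>m 1\<^sub>m n) *\<^sub>v v"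
      using M v by (intro add_mult_distrib_mat_vec) auto
    also have "((real k * p) \<cdot>\<^sub>m 1\<^sub>m n) *\<^sub>v v = (real k * p) \<cdot>\<^sub>v v"
      using v by (subst smult_mat_mult_vec[of _ n]) auto
    finally show "v \<bullet> ((M + (real k * p) \<cdot>\<^sub>m 1\<^sub>m n) *\<^sub>v v) = v \<bullet> (M *\<^sub>v v) + real k * p * (v \<bullet> v)"
      using M v by (simp add: scalar_prod_add_distrib[of _ n])
  qed
  show "\<And>v. v \<in> carrier_vec n \<Longrightarrow> (v @\<^sub>v 0\<^sub>v n) \<bullet> (Q *\<^sub>v (v @\<^sub>v 0\<^sub>v n))
        = v \<bullet> (laplacian n E1 *\<^sub>v v) + real k * p * (v \<bullet> v)"
  proof -
    fix v :: "real vec" assume v: "v \<in> carrier_vec n"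
    have "Q *\<^sub>v (v @\<^sub>v 0\<^sub>v n) = (?A *\<^sub>v v + ?Bm *\<^sub>v 0\<^sub>v n) @\<^sub>v (?Cm *\<^sub>v v + ?D *\<^sub>v 0\<^sub>v n)"
      unfolding Qd by (rule four_block_mat_mult_vec[OF A Bm Cm D v]) auto
    also have "?A *\<^sub>v v + ?Bm *\<^sub>v 0\<^sub>v n = ?A *\<^sub>v v" unfolding mz[OF Bm] by (rule right_zero_vec, rule mult_mat_vec_carrier[OF A v])
    finally have QV: "Q *\<^sub>v (v @\<^sub>v 0\<^sub>v n) = ?A *\<^sub>v v @\<^sub>v (?Cm *\<^sub>v v + ?D *\<^sub>v 0\<^sub>v n)" .
      have c1: "?A *\<^sub>v v \<in> carrier_vec n" by (rule mult_mat_vec_carrier[OF A v])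
      have c2: "?Cm *\<^sub>v v + ?D *\<^sub>v 0\<^sub>v n \<in> carrier_vec n"
        by (rule add_carrier_vec; rule mult_mat_vec_carrier, insert Cm D v, auto)
    have "(v @\<^sub>v 0\<^sub>v n) \<bullet> (Q *\<^sub>v (v @\<^sub>v 0\<^sub>v n)) = v \<bullet> (?A *\<^sub>v v) + 0\<^sub>v n \<bullet> (?Cm *\<^sub>v v + ?D *\<^sub>v 0\<^sub>v n)"
      unfolding QV by (rule scalar_prod_append[OF v _ c1 c2]) simp
    also have "0\<^sub>v n \<bullet> (?Cm *\<^sub>v v + ?D *\<^sub>v 0\<^sub>v n) = 0" using c2 by simp
    finally show "(v @\<^sub>v 0\<^sub>v n) \<bullet> (Q *\<^sub>v (v @\<^sub>v 0\<^sub>v n)) = v \<bullet> (laplacian n E1 *\<^sub>v v) + real k * p * (v \<bullet> v)"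
      using Av[OF L1 v] by simp
  qed
  show "\<And>v. v \<in> carrier_vec n \<Longrightarrow> (0\<^sub>v n @\<^sub>v v) \<bullet> (Q *\<^sub>v (0\<^sub>v n @\<^sub>v v))
        = v \<bullet> (laplacian n E2 *\<^sub>v v) + real k * p * (v \<bullet> v)"
  proof -
    fix v :: "real vec" assume v: "v \<in> carrier_vec n"
    have "Q *\<^sub>v (0\<^sub>v n @\<^sub>v v) = (?A *\<^sub>v 0\<^sub>v n + ?Bm *\<^sub>v v) @\<^sub>v (?Cm *\<^sub>v 0\<^sub>v n + ?D *\<^sub>v v)"
      unfolding Qd by (rule four_block_mat_mult_vec[OF A Bm Cm D _ v]) auto
    also have "?Cm *\<^sub>v 0\<^sub>v n + ?D *\<^sub>v v = ?D *\<^sub>v v" unfolding mz[OF Cm] by (rule left_zero_vec, rule mult_mat_vec_carrier[OF D v])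
    finally have QV: "Q *\<^sub>v (0\<^sub>v n @\<^sub>v v) = (?A *\<^sub>v 0\<^sub>v n + ?Bm *\<^sub>v v) @\<^sub>v ?D *\<^sub>v v" .
      have c1: "?D *\<^sub>v v \<in> carrier_vec n" by (rule mult_mat_vec_carrier[OF D v])
      have c2: "?A *\<^sub>v 0\<^sub>v n + ?Bm *\<^sub>v v \<in> carrier_vec n"
        by (rule add_carrier_vec; rule mult_mat_vec_carrier, insert A Bm v, auto)
    have "(0\<^sub>v n @\<^sub>v v) \<bullet> (Q *\<^sub>v (0\<^sub>v n @\<^sub>v v)) = 0\<^sub>v n \<bullet> (?A *\<^sub>v 0\<^sub>v n + ?Bm *\<^sub>v v) + v \<bullet> (?D *\<^sub>v v)"
      unfolding QV by (rule scalar_prod_append[OF _ v c2 c1]) simp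
    also have "0\<^sub>v n \<bullet> (?A *\<^sub>v 0\<^sub>v n + ?Bm *\<^sub>v v) = 0" using c2 by simp
    finally show "(0\<^sub>v n @\<^sub>v v) \<bullet> (Q *\<^sub>v (0\<^sub>v n @\<^sub>v v)) = v \<bullet> (laplacian n E2 *\<^sub>v v) + real k * p * (v \<bullet> v)"
      using Av[OF L2 v] by simp
  qed
qed

lemma layer_bound:
  fixes B :: "real mat" and p lam :: real and L :: "real mat"
  assumes G1: "simple_graph n E1" and G2: "simple_graph n E2" and kr: "k_regular_01 n k B"
    and n: "n \<ge> 2" and k: "k \<ge> 1" and p: "p > 0"
    and mu: "eigs_asc (Qp n k (laplacian n E1) (laplacian n E2) B p) ! 1 = 2 * real k * p"
    and v: "v \<in> carrier_vec n" "v \<bullet> v > 0" "v \<bullet> vec n (\<lambda>_. 1) = 0"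
    and lam: "lam \<ge> 0"
    and y: "y \<in> carrier_vec (n+n)" "y \<bullet> y = v \<bullet> v" "vec (n+n) (\<lambda>_. 1) \<bullet> y = vec n (\<lambda>_. 1) \<bullet> v"
    and yQy: "y \<bullet> (Qp n k (laplacian n E1) (laplacian n E2) B p *\<^sub>v y) = v \<bullet> (L *\<^sub>v v) + real k * p * (v \<bullet> v)"
    and vLv: "v \<bullet> (L *\<^sub>v v) \<le> lam * (v \<bullet> v)"
  shows "real k * p \<le> lam"
proof -
  let ?Q = "Qp n k (laplacian n E1) (laplacian n E2) B p"
  let ?x = "vec (n+n) (\<lambda>_. 1) :: real vec"
  note QF = Qp_facts[OF G1 G2 kr, where p = p]
  have xx: "?x \<bullet> ?x > 0" using n by (simp add: scalar_prod_def)
  have xy: "?x \<bullet> y = 0" using y(3) v(1,3) comm_scalar_prod[of v n "vec n (\<lambda>_. 1)"] by simp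
  have c: "lam + real k * p \<ge> 0" using lam p by simp
  have "y \<bullet> (?Q *\<^sub>v y) \<le> (lam + real k * p) * (y \<bullet> y)"
    unfolding yQy y(2) using vLv by (simp add: algebra_simps)
  then have "eigs_asc ?Q ! 1 \<le> lam + real k * p"
    using cf_upper[OF QF(1) QF(2) _ _ y(1) xx _ xy QF(3) _ c] n y v(2) by simp
  then show ?thesis using mu by (simp add: mult.commute)
qed

theorem mainTheorem2:
  fixes n k :: nat and E1 E2 :: "nat \<Rightarrow> nat \<Rightarrow> bool" and B :: "real mat"
  assumes "n \<ge> 2"
    and "simple_graph n E1" and "simple_graph n E2"
    and "1 \<le> k" and "k \<le> n"
    and "k_regular_01 n k B"
  shows "bdd_above ({0} \<union> {p. p > 0 \<and> mu_Nm1 n k (laplacian n E1) (laplacian n E2) B p = 2 * real k * p})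
    \<and> p_star n k (laplacian n E1) (laplacian n E2) B
        \<le> (1 / real k) * min (eigs_asc (laplacian n E1) ! 1) (eigs_asc (laplacian n E2) ! 1)"
proof -
  note n = assms(1) and G1 = assms(2) and G2 = assms(3) and k = assms(4) and kr = assms(6)
  let ?L1 = "laplacian n E1" and ?L2 = "laplacian n E2" and ?one = "vec n (\<lambda>_. 1) :: real vec"
  define lam1 where "lam1 = eigs_asc ?L1 ! 1"
  define lam2 where "lam2 = eigs_asc ?L2 ! 1"
  obtain v1 where v1: "v1 \<in> carrier_vec n" "v1 \<bullet> v1 > 0" "v1 \<bullet> ?one = 0" "v1 \<bullet> (?L1 *\<^sub>v v1) \<le> lam1 * (v1 \<bullet> v1)"
    using cf_lower[OF lap_carrier lap_sym[OF G1] n, of ?one] unfolding lam1_def by auto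
  obtain v2 where v2: "v2 \<in> carrier_vec n" "v2 \<bullet> v2 > 0" "v2 \<bullet> ?one = 0" "v2 \<bullet> (?L2 *\<^sub>v v2) \<le> lam2 * (v2 \<bullet> v2)"
    using cf_lower[OF lap_carrier lap_sym[OF G2] n, of ?one] unfolding lam2_def by auto
  have "0 \<le> lam1 * (v1 \<bullet> v1)" using lap_psd[OF G1 v1(1)] v1(4) by linarith
  then have l1: "lam1 \<ge> 0" using v1(2) by (simp add: zero_le_mult_iff)
  have "0 \<le> lam2 * (v2 \<bullet> v2)" using lap_psd[OF G2 v2(1)] v2(4) by linarith
  then have l2: "lam2 \<ge> 0" using v2(2) by (simp add: zero_le_mult_iff)
  define S where "S = {0} \<union> {p. p > 0 \<and> mu_Nm1 n k ?L1 ?L2 B p = 2 * real k * p}"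
  define M where "M = (1 / real k) * min lam1 lam2"
  have one: "?one \<in> carrier_vec n" by simp
  have bound: "\<And>p. p \<in> S \<Longrightarrow> p \<le> M"
  proof -
    fix p assume "p \<in> S"
    then consider "p = 0" | "p > 0" "eigs_asc (Qp n k ?L1 ?L2 B p) ! 1 = 2 * real k * p"
      unfolding S_def mu_Nm1_def by auto
    then show "p \<le> M"
    proof cases
      case 1
      then show ?thesis unfolding M_def using l1 l2 by simp
    next
      case 2
      note QF = Qp_facts[OF G1 G2 kr, where p = p]
      have one2: "vec (n+n) (\<lambda>_. 1) = ?one @\<^sub>v ?one" by (rule eq_vecI) auto
      have b1: "real k * p \<le> lam1"
      proof (rule layer_bound[OF G1 G2 kr n k 2(1) 2(2) v1(1-3) l1 _ _ _ QF(4)[OF v1(1)] v1(4)])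
        show "v1 @\<^sub>v 0\<^sub>v n \<in> carrier_vec (n + n)" using v1 by simp
        show "(v1 @\<^sub>v 0\<^sub>v n) \<bullet> (v1 @\<^sub>v 0\<^sub>v n) = v1 \<bullet> v1"
          using scalar_prod_append[OF v1(1) zero_carrier_vec v1(1) zero_carrier_vec] by simp
        show "vec (n + n) (\<lambda>_. 1) \<bullet> (v1 @\<^sub>v 0\<^sub>v n) = ?one \<bullet> v1"
          unfolding one2 using scalar_prod_append[OF one one v1(1) zero_carrier_vec] by simp
      qed
      have b2: "real k * p \<le> lam2"
      proof (rule layer_bound[OF G1 G2 kr n k 2(1) 2(2) v2(1-3) l2 _ _ _ QF(5)[OF v2(1)] v2(4)])
        show "0\<^sub>v n @\<^sub>v v2 \<in> carrier_vec (n + n)" using v2 by simp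
        show "(0\<^sub>v n @\<^sub>v v2) \<bullet> (0\<^sub>v n @\<^sub>v v2) = v2 \<bullet> v2"
          using scalar_prod_append[OF zero_carrier_vec v2(1) zero_carrier_vec v2(1)] by simp
        show "vec (n + n) (\<lambda>_. 1) \<bullet> (0\<^sub>v n @\<^sub>v v2) = ?one \<bullet> v2"
          unfolding one2 using scalar_prod_append[OF one one zero_carrier_vec v2(1)] by simp
      qed
      have kpos: "real k > 0" using k by simp
      have "real k * p \<le> min lam1 lam2" using b1 b2 by simp
      then show ?thesis unfolding M_def using kpos by (simp add: field_simps)
    qed
  qed
  have bdd: "bdd_above S" by (rule bdd_aboveI[of _ M]) (rule bound)
  have "Sup S \<le> M" by (rule cSup_least) (auto simp: S_def bound[unfolded S_def])
  then show ?thesis using bdd unfolding S_def M_def p_star_def lam1_def lam2_def by simp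
qed

end
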